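(* Let $m\ge 2$, $\alpha\in[0,1]$, $\pi$ a permutation of $E_{m-1}=\{1,\dots,m-1\}$ and $V_\alpha$ as defined below. Then $V_\alpha$ is ergodic: for every $\mathbf{x}\in S^{m-1}$ the limit $\lim_{n\to\infty}\frac1n\sum_{k=0}^{n-1}V_\alpha^k(\mathbf{x})$ exists.
   Context: $S^{m-1}=\{\mathbf{x}=(x_1,\dots,x_m)\in\mathbb{R}^m: x_i\ge 0,\ \sum_{i=1}^m x_i=1\}$. For $\alpha\in[0,1]$ the operator $V_\alpha\colon S^{m-1}\to S^{m-1}$ is $\mathbf{x}\mapsto\mathbf{x}'$ with $x'_k=2x_m(\alpha x_k+(1-\alpha)x_{\pi(k)})$ for $k=1,\dots,m-1$ and $x'_m=x_m^2+\big(\sum_{i=1}^{m-1}x_i\big)^2$; $V_\alpha^k$ is its $k$-fold iterate ($V_\alpha^0=\mathrm{Id}$). *)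

theory Defs
  imports "HOL-Analysis.Analysis" "HOL-Combinatorics.Permutations"
begin

text \<open>Points of R^m are represented as functions nat => real, using coordinates 1..m.\<close>

definition std_simplex_S :: "nat \<Rightarrow> (nat \<Rightarrow> real) set" where
  "std_simplex_S m = {x. (\<forall>i\<in>{1..m}. x i \<ge> 0) \<and> (\<Sum>i=1..m. x i) = 1}"

definition V :: "nat \<Rightarrow> real \<Rightarrow> (nat \<Rightarrow> nat) \<Rightarrow> (nat \<Rightarrow> real) \<Rightarrow> (nat \<Rightarrow> real)" where
  "V m \<alpha> \<pi> x = (\<lambda>k.
     if 1 \<le> k \<and> k \<le> m - 1 then 2 * x m * (\<alpha> * x k + (1 - \<alpha>) * x (\<pi> k))
     else if k = m then (x m)\<^sup>2 + (\<Sum>i=1..m-1. x i)\<^sup>2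
     else 0)"

end

theory Submission imports Defs "HOL-Combinatorics.Cycles" begin

definition ces :: "(nat \<Rightarrow> real) \<Rightarrow> nat \<Rightarrow> real" where
  "ces f n = (1 / real n) * (\<Sum>k<n. f k)"

lemma ces_eq: "ces f = (\<lambda>n. (1 / real n) * (\<Sum>k<n. f k))"
  by (simp add: fun_eq_iff ces_def)

lemma ces_null:
  assumes "f \<longlonglongrightarrow> 0" shows "ces f \<longlonglongrightarrow> 0"
proof (rule LIMSEQ_I)
  fix r :: real assume r: "0 < r"
  from LIMSEQ_D[OF assms, of "r/2"] r obtain M where M: "\<And>k. k\<ge>M \<Longrightarrow> norm (f k - 0) < r/2" by auto
  define C where "C = (\<Sum>k<M. \<bar>f k\<bar>)"
  have C0: "C \<ge> 0" unfolding C_def by (simp add: sum_nonneg)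
  obtain K::nat where K: "real K > 2*C/r" using reals_Archimedean2 by blast
  show "\<exists>no. \<forall>n\<ge>no. norm (ces f n - 0) < r"
  proof (intro exI allI impI)
    fix n assume n: "n \<ge> M + K + 1"
    have npos: "real n > 0" using n by simp
    have sp: "{..<n} = {..<M} \<union> {M..<n}" using n by auto
    have "\<bar>\<Sum>k<n. f k\<bar> \<le> (\<Sum>k<n. \<bar>f k\<bar>)" by (rule sum_abs)
    also have "\<dots> = C + (\<Sum>k\<in>{M..<n}. \<bar>f k\<bar>)"
      unfolding C_def sp by (rule sum.union_disjoint) auto
    also have "(\<Sum>k\<in>{M..<n}. \<bar>f k\<bar>) \<le> (\<Sum>k\<in>{M..<n}. r/2)"
      using M by (intro sum_mono) (metis atLeastLessThan_iff diff_zero less_eq_real_def real_norm_def)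
    also have "\<dots> = real (n - M) * (r/2)" by simp
    also have "\<dots> \<le> real n * (r/2)" using r by (intro mult_right_mono) auto
    finally have S: "\<bar>\<Sum>k<n. f k\<bar> \<le> C + real n * (r/2)" by simp
    have "C < real n * (r/2)"
    proof -
      have "real n > 2*C/r" using K n by linarith
      hence "real n * r > 2*C" using r by (simp add: field_simps)
      thus ?thesis by simp
    qed
    hence "\<bar>\<Sum>k<n. f k\<bar> < real n * r" using S by linarith
    hence "\<bar>\<Sum>k<n. f k\<bar> / real n < r" using npos by (simp add: field_simps)
    thus "norm (ces f n - 0) < r" unfolding ces_def by simp
  qed
qed

lemma ces_conv:
  assumes "f \<longlonglongrightarrow> L" shows "ces f \<longlonglongrightarrow> L"
proof -
  have "(\<lambda>k. f k - L) \<longlonglongrightarrow> 0" using assms by (simp add: LIMSEQ_iff)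
  hence "(\<lambda>n. ces (\<lambda>k. f k - L) n + L) \<longlonglongrightarrow> 0 + L" by (intro tendsto_add ces_null) auto
  moreover have "\<forall>\<^sub>F n in sequentially. ces (\<lambda>k. f k - L) n + L = ces f n"
    using eventually_gt_at_top[of 0]
    by eventually_elim (simp add: ces_def sum_subtractf field_simps)
  ultimately show ?thesis by (simp add: tendsto_cong)
qed

lemma ces_mult:
  assumes a: "\<And>k. \<bar>a k\<bar> \<le> B" and la: "ces a \<longlonglongrightarrow> La" and c: "c \<longlonglongrightarrow> c0"
  shows "ces (\<lambda>k. c k * a k) \<longlonglongrightarrow> c0 * La"
proof -
  have c0: "(\<lambda>k. \<bar>c k - c0\<bar> * B) \<longlonglongrightarrow> 0"
  proof -
    have "(\<lambda>k. c k - c0) \<longlonglongrightarrow> 0" using c by (simp add: LIMSEQ_iff)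
    hence "(\<lambda>k. \<bar>c k - c0\<bar>) \<longlonglongrightarrow> 0" by (simp add: tendsto_rabs_zero)
    thus ?thesis using tendsto_mult_left_zero by blast
  qed
  have "(\<lambda>k. (c k - c0) * a k) \<longlonglongrightarrow> 0"
  proof (rule Lim_null_comparison[OF _ c0])
    show "\<forall>\<^sub>F k in sequentially. norm ((c k - c0) * a k) \<le> \<bar>c k - c0\<bar> * B"
      by (intro always_eventually allI) (simp add: abs_mult mult_left_mono a)
  qed
  hence "(\<lambda>n. c0 * ces a n + ces (\<lambda>k. (c k - c0) * a k) n) \<longlonglongrightarrow> c0 * La + 0"
    by (intro tendsto_add tendsto_mult_left la ces_null)
  moreover have "\<And>n. c0 * ces a n + ces (\<lambda>k. (c k - c0) * a k) n = ces (\<lambda>k. c k * a k) n"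
    by (simp add: ces_def sum_distrib_left sum_subtractf algebra_simps sum_divide_distrib)
  ultimately show ?thesis by simp
qed

definition Aop :: "real \<Rightarrow> (nat \<Rightarrow> nat) \<Rightarrow> (nat \<Rightarrow> real) \<Rightarrow> nat \<Rightarrow> real" where
  "Aop \<alpha> \<pi> z = (\<lambda>i. \<alpha> * z i + (1 - \<alpha>) * z (\<pi> i))"

lemma Aop_Suc: "(Aop \<alpha> \<pi> ^^ Suc n) z i = \<alpha> * (Aop \<alpha> \<pi> ^^ n) z i + (1 - \<alpha>) * (Aop \<alpha> \<pi> ^^ n) z (\<pi> i)"
  by (simp add: Aop_def)

lemma Aop_bound:
  assumes perm: "\<pi> permutes A" and fin: "finite A" and a0: "0 \<le> \<alpha>" and a1: "\<alpha> \<le> 1"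
  shows "i \<in> A \<Longrightarrow> \<bar>(Aop \<alpha> \<pi> ^^ n) z i\<bar> \<le> (\<Sum>j\<in>A. \<bar>z j\<bar>)"
proof (induction n arbitrary: i)
  case 0
  then show ?case using fin by simp (rule member_le_sum, auto)
next
  case (Suc n)
  have pi: "\<pi> i \<in> A" using Suc.prems perm by (simp add: permutes_in_image)
  define B where "B = (\<Sum>j\<in>A. \<bar>z j\<bar>)"
  have h1: "\<bar>(Aop \<alpha> \<pi> ^^ n) z i\<bar> \<le> B" using Suc B_def by auto
  have h2: "\<bar>(Aop \<alpha> \<pi> ^^ n) z (\<pi> i)\<bar> \<le> B" using Suc.IH[OF pi] B_def by auto
  have "\<bar>\<alpha> * (Aop \<alpha> \<pi> ^^ n) z i + (1 - \<alpha>) * (Aop \<alpha> \<pi> ^^ n) z (\<pi> i)\<bar>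
      \<le> \<alpha> * \<bar>(Aop \<alpha> \<pi> ^^ n) z i\<bar> + (1 - \<alpha>) * \<bar>(Aop \<alpha> \<pi> ^^ n) z (\<pi> i)\<bar>"
    using a0 a1 abs_triangle_ineq[of "\<alpha> * (Aop \<alpha> \<pi> ^^ n) z i" "(1 - \<alpha>) * (Aop \<alpha> \<pi> ^^ n) z (\<pi> i)"]
    by (simp add: abs_mult)
  also have "\<dots> \<le> \<alpha> * B + (1 - \<alpha>) * B"
    using a0 a1 h1 h2 by (intro add_mono mult_left_mono) auto
  finally show ?case by (simp only: Aop_Suc B_def) (simp add: algebra_simps)
qed

lemma Aop_sum:
  assumes perm: "\<pi> permutes A"
  shows "(\<Sum>i\<in>A. (Aop \<alpha> \<pi> ^^ n) z i) = (\<Sum>i\<in>A. z i)"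
proof (induction n)
  case 0 then show ?case by simp
next
  case (Suc n)
  have p: "(\<Sum>i\<in>A. (Aop \<alpha> \<pi> ^^ n) z (\<pi> i)) = (\<Sum>i\<in>A. (Aop \<alpha> \<pi> ^^ n) z i)"
    by (rule sum.reindex_bij_betw[OF permutes_imp_bij[OF perm]])
  show ?case
    by (simp only: Aop_Suc sum.distrib sum_distrib_left[symmetric] p Suc) (simp add: algebra_simps)
qed

lemma Aop_zero:
  assumes perm: "\<pi> permutes A" and z: "\<And>j. j \<in> A \<Longrightarrow> z j = 0"
  shows "i \<in> A \<Longrightarrow> (Aop \<alpha> \<pi> ^^ n) z i = 0"
proof (induction n arbitrary: i)
  case 0 then show ?case using z by simp
next
  case (Suc n)
  have pi: "\<pi> i \<in> A" using Suc.prems perm by (simp add: permutes_in_image)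
  show ?case using Suc.IH[OF pi] Suc.IH[OF Suc.prems] by (subst Aop_Suc) simp
qed

lemma Aop_pow_add': "(Aop \<alpha> \<pi> ^^ n) (\<lambda>j. f j + g j) i = (Aop \<alpha> \<pi> ^^ n) f i + (Aop \<alpha> \<pi> ^^ n) g i"
  by (induction n arbitrary: i) (simp_all only: Aop_Suc funpow_0, simp_all add: algebra_simps)

lemma Aop_pow_diff': "(Aop \<alpha> \<pi> ^^ n) (\<lambda>j. f j - g j) i = (Aop \<alpha> \<pi> ^^ n) f i - (Aop \<alpha> \<pi> ^^ n) g i"
  by (induction n arbitrary: i) (simp_all only: Aop_Suc funpow_0, simp_all add: algebra_simps)

lemma Aop_pow_add: "(Aop \<alpha> \<pi> ^^ n) (\<lambda>j. f j + g j) = (\<lambda>j. (Aop \<alpha> \<pi> ^^ n) f j + (Aop \<alpha> \<pi> ^^ n) g j)"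
  using Aop_pow_add' by blast

lemma Aop_pow_diff: "(Aop \<alpha> \<pi> ^^ n) (\<lambda>j. f j - g j) = (\<lambda>j. (Aop \<alpha> \<pi> ^^ n) f j - (Aop \<alpha> \<pi> ^^ n) g j)"
  using Aop_pow_diff' by blast

lemma Aop_ces:
  assumes perm: "\<pi> permutes A" and fin: "finite A" and a0: "0 \<le> \<alpha>" and a1: "\<alpha> \<le> 1" and i: "i \<in> A"
  shows "\<exists>L. ces (\<lambda>k. (Aop \<alpha> \<pi> ^^ k) z i) \<longlonglongrightarrow> L"
proof (cases "\<alpha> = 1")
  case True
  have "Aop \<alpha> \<pi> = id" using True by (simp add: Aop_def fun_eq_iff)
  hence "\<And>k. (Aop \<alpha> \<pi> ^^ k) z i = z i" by simp
  hence "ces (\<lambda>k. (Aop \<alpha> \<pi> ^^ k) z i) = ces (\<lambda>k. z i)" by simp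
  then show ?thesis using ces_conv[OF tendsto_const] by metis
next
  case False
  hence a1': "1 - \<alpha> \<noteq> 0" by simp
  obtain N where N: "(\<pi> ^^ N) = id" "N > 0"
    using permutation_is_nilpotent[OF permutes_imp_permutation[OF fin perm]] by blast
  define Q where "Q = (\<lambda>i. (1 / real N) * (\<Sum>j<N. z ((\<pi> ^^ j) i)))"
  have Qpi: "Q (\<pi> i) = Q i" for i
  proof -
    have "(\<Sum>j<N. z ((\<pi> ^^ j) (\<pi> i))) = (\<Sum>j<N. z ((\<pi> ^^ Suc j) i))"
      by (simp only: funpow_Suc_right o_apply)
    also have "\<dots> = (\<Sum>j<Suc N. z ((\<pi> ^^ j) i)) - z i"
      by (simp only: sum.lessThan_Suc_shift) simp
    also have "\<dots> = (\<Sum>j<N. z ((\<pi> ^^ j) i))" using N by simp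
    finally show ?thesis unfolding Q_def by simp
  qed
  have AQ: "Aop \<alpha> \<pi> Q = Q" by (simp add: Aop_def fun_eq_iff Qpi algebra_simps)
  have AnQ: "(Aop \<alpha> \<pi> ^^ n) Q = Q" for n by (induction n) (simp_all add: AQ)
  define v where "v = (\<lambda>i. (1 / real N) * (\<Sum>j<N. \<Sum>l<j. z ((\<pi> ^^ l) i)))"
  have vdiff: "v i - v (\<pi> i) = z i - Q i" for i
  proof -
    have "v (\<pi> i) = (1 / real N) * (\<Sum>j<N. \<Sum>l<j. z ((\<pi> ^^ Suc l) i))"
      unfolding v_def by (simp only: funpow_Suc_right o_apply)
    hence "v i - v (\<pi> i) = (1 / real N) * (\<Sum>j<N. \<Sum>l<j. z ((\<pi> ^^ l) i) - z ((\<pi> ^^ Suc l) i))"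
      unfolding v_def by (simp add: sum_subtractf right_diff_distrib)
    also have "\<dots> = (1 / real N) * (\<Sum>j<N. z i - z ((\<pi> ^^ j) i))"
      by (simp only: sum_lessThan_telescope'[of "\<lambda>l. z ((\<pi> ^^ l) i)"]) simp
    also have "\<dots> = z i - Q i" unfolding Q_def using N by (simp add: sum_subtractf field_simps)
    finally show ?thesis .
  qed
  define w where "w = (\<lambda>i. v i / (1 - \<alpha>))"
  have zdec: "z = (\<lambda>i. Q i + (w i - Aop \<alpha> \<pi> w i))"
  proof
    fix i
    have "w i - Aop \<alpha> \<pi> w i = (1 - \<alpha>) * (w i - w (\<pi> i))" by (simp add: Aop_def algebra_simps)
    also have "\<dots> = v i - v (\<pi> i)" unfolding w_def using a1' by (simp add: diff_divide_distrib[symmetric])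
    finally show "z i = Q i + (w i - Aop \<alpha> \<pi> w i)" using vdiff[of i] by simp
  qed
  have Ak: "(Aop \<alpha> \<pi> ^^ k) z i = Q i + ((Aop \<alpha> \<pi> ^^ k) w i - (Aop \<alpha> \<pi> ^^ Suc k) w i)" for k
  proof -
    have "(Aop \<alpha> \<pi> ^^ k) z = (Aop \<alpha> \<pi> ^^ k) (\<lambda>i. Q i + (w i - Aop \<alpha> \<pi> w i))"
      using zdec by metis
    also have "\<dots> = (\<lambda>j. Q j + ((Aop \<alpha> \<pi> ^^ k) w j - (Aop \<alpha> \<pi> ^^ k) (Aop \<alpha> \<pi> w) j))"
      by (simp add: Aop_pow_add Aop_pow_diff AnQ)
    finally show ?thesis by (simp only: funpow_Suc_right o_apply)
  qed
  define B where "B = (\<Sum>j\<in>A. \<bar>w j\<bar>)"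
  have Bw: "\<bar>(Aop \<alpha> \<pi> ^^ n) w i\<bar> \<le> B" for n
    unfolding B_def by (rule Aop_bound[OF perm fin a0 a1 i])
  have eq: "ces (\<lambda>k. (Aop \<alpha> \<pi> ^^ k) z i) n = Q i + (w i - (Aop \<alpha> \<pi> ^^ n) w i) / real n"
    if "n > 0" for n
  proof -
    have "(\<Sum>k<n. (Aop \<alpha> \<pi> ^^ k) z i) = real n * Q i + (w i - (Aop \<alpha> \<pi> ^^ n) w i)"
      by (simp only: Ak sum.distrib sum_lessThan_telescope'[of "\<lambda>k. (Aop \<alpha> \<pi> ^^ k) w i"]) simp
    thus ?thesis using that by (simp add: ces_def field_simps)
  qed
  have "(\<lambda>n. (w i - (Aop \<alpha> \<pi> ^^ n) w i) / real n) \<longlonglongrightarrow> 0"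
  proof (rule Lim_null_comparison[OF _ lim_const_over_n[of "\<bar>w i\<bar> + B"]])
    show "\<forall>\<^sub>F n in sequentially. norm ((w i - (Aop \<alpha> \<pi> ^^ n) w i) / real n) \<le> (\<bar>w i\<bar> + B) / real n"
    proof (intro always_eventually allI)
      fix n
      have "\<bar>w i - (Aop \<alpha> \<pi> ^^ n) w i\<bar> \<le> \<bar>w i\<bar> + B" using Bw[of n] by linarith
      thus "norm ((w i - (Aop \<alpha> \<pi> ^^ n) w i) / real n) \<le> (\<bar>w i\<bar> + B) / real n"
        by (simp add: divide_right_mono)
    qed
  qed
  hence "(\<lambda>n. Q i + (w i - (Aop \<alpha> \<pi> ^^ n) w i) / real n) \<longlonglongrightarrow> Q i + 0"
    by (intro tendsto_add tendsto_const)
  moreover have "\<forall>\<^sub>F n in sequentially. Q i + (w i - (Aop \<alpha> \<pi> ^^ n) w i) / real n = ces (\<lambda>k. (Aop \<alpha> \<pi> ^^ k) z i) n"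
    using eventually_gt_at_top[of 0] by eventually_elim (simp add: eq)
  ultimately show ?thesis using tendsto_cong by fastforce
qed


lemma V_coord: "i \<in> {1..m-1} \<Longrightarrow> V m \<alpha> \<pi> z i = 2 * z m * (\<alpha> * z i + (1 - \<alpha>) * z (\<pi> i))"
  by (simp add: V_def)

lemma V_m: "m \<ge> 2 \<Longrightarrow> V m \<alpha> \<pi> z m = (z m)\<^sup>2 + (\<Sum>i=1..m-1. z i)\<^sup>2"
proof -
  assume "m \<ge> 2"
  hence "\<not> (m \<le> m - 1)" by arith
  thus ?thesis by (simp add: V_def)
qed

lemma V_sum:
  assumes perm: "\<pi> permutes {1..m-1}"
  shows "(\<Sum>i=1..m-1. V m \<alpha> \<pi> z i) = 2 * z m * (\<Sum>i=1..m-1. z i)"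
proof -
  have p: "(\<Sum>i=1..m-1. z (\<pi> i)) = (\<Sum>i=1..m-1. z i)"
    by (rule sum.reindex_bij_betw[OF permutes_imp_bij[OF perm]])
  have "(\<Sum>i=1..m-1. V m \<alpha> \<pi> z i) = (\<Sum>i=1..m-1. 2 * z m * (\<alpha> * z i + (1 - \<alpha>) * z (\<pi> i)))"
    by (rule sum.cong) (simp_all add: V_coord)
  also have "\<dots> = 2 * z m * (\<Sum>i=1..m-1. \<alpha> * z i + (1 - \<alpha>) * z (\<pi> i))"
    by (simp add: sum_distrib_left)
  also have "\<dots> = 2 * z m * (\<alpha> * (\<Sum>i=1..m-1. z i) + (1 - \<alpha>) * (\<Sum>i=1..m-1. z (\<pi> i)))"
    by (simp only: sum.distrib sum_distrib_left)
  also have "\<dots> = 2 * z m * (\<Sum>i=1..m-1. z i)" unfolding p by (simp add: algebra_simps)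
  finally show ?thesis .
qed

theorem corollary2:
  fixes m :: nat and \<alpha> :: real and \<pi> :: "nat \<Rightarrow> nat"
  assumes "m \<ge> 2" and "0 \<le> \<alpha>" and "\<alpha> \<le> 1"
    and "\<pi> permutes {1..m-1}"
  shows "\<forall>x\<in>std_simplex_S m. \<exists>L :: nat \<Rightarrow> real. \<forall>i\<in>{1..m}.
           (\<lambda>n. (1 / real n) * (\<Sum>k<n. ((V m \<alpha> \<pi> ^^ k) x) i)) \<longlonglongrightarrow> L i"
proof
  fix x assume xS: "x \<in> std_simplex_S m"
  note m2 = assms(1) and a0 = assms(2) and a1 = assms(3) and perm = assms(4)
  define A where "A = {1..m-1}"
  have finA: "finite A" by (simp add: A_def)
  have permA: "\<pi> permutes A" using perm by (simp add: A_def)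
  have xnn: "\<And>i. i \<in> {1..m} \<Longrightarrow> x i \<ge> 0" and xsum: "(\<Sum>i=1..m. x i) = 1"
    using xS by (auto simp: std_simplex_S_def)
  define X where "X n = (V m \<alpha> \<pi> ^^ n) x" for n
  define s where "s n = (\<Sum>i=1..m-1. X n i)" for n
  define t where "t n = X n m" for n
  have XS: "X (Suc n) = V m \<alpha> \<pi> (X n)" for n by (simp add: X_def)
  have sS: "s (Suc n) = 2 * t n * s n" for n
    unfolding s_def t_def XS by (rule V_sum[OF perm])
  have tS: "t (Suc n) = (t n)\<^sup>2 + (s n)\<^sup>2" for n
    unfolding s_def t_def XS by (rule V_m[OF m2])
  have mS: "m = Suc (m - 1)" using m2 by simp
  have s0t0: "s 0 + t 0 = 1"
  proof -
    have ins: "{1..m} = insert m {1..m-1}" using m2 by auto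
    have "(\<Sum>i=1..m. x i) = (\<Sum>i=1..m-1. x i) + x m"
      unfolding ins by (subst sum.insert) auto
    thus ?thesis using xsum by (simp add: s_def t_def X_def)
  qed
  have st1: "s n + t n = 1" for n
  proof (induction n)
    case 0 then show ?case by (rule s0t0)
  next
    case (Suc n)
    have "s (Suc n) + t (Suc n) = (s n + t n)\<^sup>2" by (simp add: sS tS power2_eq_square algebra_simps)
    then show ?case using Suc by simp
  qed
  have s0nn: "s 0 \<ge> 0" unfolding s_def X_def using xnn m2 by (auto intro!: sum_nonneg)
  have t0nn: "t 0 \<ge> 0" unfolding t_def X_def using xnn m2 by auto
  define u where "u n = t n - 1/2" for n
  have uS: "u (Suc n) = 2 * (u n)\<^sup>2" for n
  proof -
    have sn: "s n = 1 - t n" using st1[of n] by simp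
    show ?thesis unfolding u_def tS sn by (simp add: power2_eq_square algebra_simps)
  qed
  have u0: "\<bar>u 0\<bar> \<le> 1/2" using s0nn t0nn s0t0 unfolding u_def by linarith
  obtain T where T: "t \<longlonglongrightarrow> T"
  proof (cases "\<bar>u 0\<bar> = 1/2")
    case True
    have "u (Suc n) = 1/2" for n
    proof (induction n)
      case 0
      have "(u 0)\<^sup>2 = \<bar>u 0\<bar>\<^sup>2" by (rule power2_abs[symmetric])
      also have "\<dots> = 1/4" unfolding True by (simp add: power2_eq_square)
      finally have "(u 0)\<^sup>2 = 1/4" .
      then show ?case using uS[of 0] by simp
    next
      case (Suc n) show ?case by (simp only: uS[of "Suc n"] Suc.IH) (simp add: power2_eq_square)
    qed
    hence "(\<lambda>n. t (Suc n)) = (\<lambda>n. 1)" by (simp add: u_def fun_eq_iff algebra_simps)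
    hence "(\<lambda>n. t (Suc n)) \<longlonglongrightarrow> 1" by simp
    hence "t \<longlonglongrightarrow> 1" by (rule LIMSEQ_imp_Suc)
    then show ?thesis using that by blast
  next
    case False
    define q where "q = 2 * \<bar>u 0\<bar>"
    have q0: "0 \<le> q" and q1: "q < 1" using False u0 by (auto simp: q_def)
    have ub: "\<bar>u n\<bar> \<le> q ^ n * \<bar>u 0\<bar>" for n
    proof (induction n)
      case 0 then show ?case by simp
    next
      case (Suc n)
      have "q ^ n \<le> 1" using q0 q1 by (simp add: power_le_one)
      hence "q ^ n * \<bar>u 0\<bar> \<le> \<bar>u 0\<bar>" using q0 by (simp add: mult_left_le_one_le)
      hence un: "\<bar>u n\<bar> \<le> \<bar>u 0\<bar>" using Suc.IH by linarith
      have "\<bar>u (Suc n)\<bar> = 2 * \<bar>u n\<bar> * \<bar>u n\<bar>" by (simp add: uS power2_eq_square abs_mult)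
      also have "\<dots> \<le> 2 * \<bar>u 0\<bar> * \<bar>u n\<bar>" using un by (simp add: mult_right_mono)
      also have "\<dots> \<le> q * (q ^ n * \<bar>u 0\<bar>)" using Suc q0 by (simp add: q_def mult_left_mono)
      finally show ?case by simp
    qed
    have "(\<lambda>n. q ^ n * \<bar>u 0\<bar>) \<longlonglongrightarrow> 0"
      using q0 q1 by (intro tendsto_mult_left_zero LIMSEQ_power_zero) auto
    hence "u \<longlonglongrightarrow> 0" by (rule Lim_null_comparison[rotated]) (simp add: ub)
    hence "(\<lambda>n. u n + 1/2) \<longlonglongrightarrow> 0 + 1/2" by (intro tendsto_add tendsto_const)
    hence "t \<longlonglongrightarrow> 1/2" by (simp add: u_def)
    then show ?thesis using that by blast
  qed
  have conv: "\<exists>l. ces (\<lambda>k. X k i) \<longlonglongrightarrow> l" if i: "i \<in> {1..m}" for i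
  proof (cases "i = m")
    case True
    have "(\<lambda>k. X k i) = t" by (simp add: True t_def fun_eq_iff)
    then show ?thesis using ces_conv[OF T] by auto
  next
    case False
    hence iA: "i \<in> A" using i by (auto simp: A_def)
    define c where "c n = (\<Prod>j<n. 2 * t j)" for n
    define a where "a n = (Aop \<alpha> \<pi> ^^ n) x i" for n
    have Xc: "\<forall>j\<in>A. X n j = c n * (Aop \<alpha> \<pi> ^^ n) x j" for n
    proof (induction n)
      case 0 then show ?case by (simp add: c_def X_def)
    next
      case (Suc n)
      show ?case
      proof
        fix j assume j: "j \<in> A"
        have pj: "\<pi> j \<in> A" using j permA by (simp add: permutes_in_image)
        have "X (Suc n) j = 2 * t n * (\<alpha> * X n j + (1 - \<alpha>) * X n (\<pi> j))"
          using j by (simp add: XS V_coord A_def t_def)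
        also have "\<dots> = c (Suc n) * (Aop \<alpha> \<pi> ^^ Suc n) x j"
          using Suc j pj by (simp only: Aop_Suc) (simp add: c_def algebra_simps)
        finally show "X (Suc n) j = c (Suc n) * (Aop \<alpha> \<pi> ^^ Suc n) x j" .
      qed
    qed
    have sc: "s n = c n * s 0" for n
    proof -
      have "s n = (\<Sum>j\<in>A. c n * (Aop \<alpha> \<pi> ^^ n) x j)"
        unfolding s_def A_def[symmetric] using Xc[of n] by (intro sum.cong) auto
      also have "\<dots> = c n * (\<Sum>j\<in>A. x j)" by (simp add: sum_distrib_left[symmetric] Aop_sum[OF permA])
      also have "(\<Sum>j\<in>A. x j) = s 0" by (simp add: s_def A_def X_def)
      finally show ?thesis .
    qed
    show ?thesis
    proof (cases "s 0 = 0")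
      case True
      have xz: "x j = 0" if "j \<in> A" for j
      proof -
        have "\<forall>j\<in>A. x j = 0"
          using True xnn finA by (subst sum_nonneg_eq_0_iff[symmetric]) (auto simp: s_def X_def A_def)
        thus ?thesis using that by blast
      qed
      have "X k i = 0" for k using Xc[of k] iA Aop_zero[OF permA xz iA] by simp
      hence "ces (\<lambda>k. X k i) = (\<lambda>n. 0)" by (simp add: ces_def fun_eq_iff)
      then show ?thesis by auto
    next
      case False
      hence sp: "s 0 > 0" using s0nn by simp
      have "c n = (1 - t n) / s 0" for n using sc[of n] st1[of n] sp by (simp add: field_simps)
      hence ceq: "c = (\<lambda>n. (1 - t n) / s 0)" by (simp add: fun_eq_iff)
      have "(\<lambda>n. (1 - t n) / s 0) \<longlonglongrightarrow> (1 - T) / s 0"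
        by (intro tendsto_divide tendsto_diff tendsto_const T) (use sp in simp)
      hence cl: "c \<longlonglongrightarrow> (1 - T) / s 0" by (simp only: ceq)
      obtain La where La: "ces a \<longlonglongrightarrow> La"
      proof -
        have aeq: "(\<lambda>k. (Aop \<alpha> \<pi> ^^ k) x i) = a" by (simp add: a_def fun_eq_iff)
        show ?thesis using Aop_ces[OF permA finA a0 a1 iA, of x] that unfolding aeq by blast
      qed
      have ab: "\<bar>a k\<bar> \<le> (\<Sum>j\<in>A. \<bar>x j\<bar>)" for k
        unfolding a_def by (rule Aop_bound[OF permA finA a0 a1 iA])
      have "ces (\<lambda>k. c k * a k) \<longlonglongrightarrow> (1 - T) / s 0 * La" by (rule ces_mult[OF ab La cl])
      moreover have "(\<lambda>k. c k * a k) = (\<lambda>k. X k i)" using Xc iA by (simp add: a_def fun_eq_iff)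
      ultimately show ?thesis by auto
    qed
  qed
  then obtain L where L: "\<forall>i\<in>{1..m}. ces (\<lambda>k. X k i) \<longlonglongrightarrow> L i" by metis
  then show "\<exists>L :: nat \<Rightarrow> real. \<forall>i\<in>{1..m}.
           (\<lambda>n. (1 / real n) * (\<Sum>k<n. ((V m \<alpha> \<pi> ^^ k) x) i)) \<longlonglongrightarrow> L i"
    using L unfolding ces_eq X_def by blast
qed

end
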